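(* Let $N,M,n$ be integers with $1\le M\le N$ and $1\le n\le N$, and let $X\sim\mathrm{HypGeo}(N;M,n)$. Then $$E\Big(\Big|\log\frac{X}{EX}\Big|\,\mathbb{1}_{\{X>0\}}\Big)\le \frac{4N\log N}{nM}+2\sqrt{\frac{N}{nM}} .$$
   Context: $X\sim\mathrm{HypGeo}(N;M,n)$ means $P(X=k)=\binom{M}{k}\binom{N-M}{n-k}/\binom{N}{n}$ for $k=0,\dots,n$. $\log$ is the natural logarithm and $\mathbb{1}_A$ is the indicator of the event $A$. *)

theory Defs
  imports Complex_Main
begin

definition hypgeo_prob :: "nat \<Rightarrow> nat \<Rightarrow> nat \<Rightarrow> nat \<Rightarrow> real" where
  "hypgeo_prob N M n k =
     real (M choose k) * real ((N - M) choose (n - k)) / real (N choose n)"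

definition hypgeo_expect :: "nat \<Rightarrow> nat \<Rightarrow> nat \<Rightarrow> (nat \<Rightarrow> real) \<Rightarrow> real" where
  "hypgeo_expect N M n g = (\<Sum>k\<in>{0..n}. hypgeo_prob N M n k * g k)"

end

theory Submission imports Defs begin

lemma L0: assumes "M \<le> N"
  shows "(\<Sum>k\<in>{0..n}. (M choose k) * ((N-M) choose (n-k))) = N choose n"
  using vandermonde[where r=n and m=M and n="N-M"] assms by (simp add: atLeast0AtMost)

lemma L1: assumes "1 \<le> M" "M \<le> N" "1 \<le> n"
  shows "(\<Sum>k\<in>{0..n}. k * (M choose k) * ((N-M) choose (n-k))) = M * ((N-1) choose (n-1))"
proof -
  obtain n' where n: "n = Suc n'" using assms by (cases n) auto
  obtain M' where M: "M = Suc M'" using assms by (cases M) auto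
  have "(\<Sum>k\<in>{0..n}. k * (M choose k) * ((N-M) choose (n-k)))
      = (\<Sum>i\<le>n'. Suc i * (Suc M' choose Suc i) * ((N-M) choose (n'-i)))"
    unfolding atLeast0AtMost n M by (subst sum.atMost_Suc_shift) simp
  also have "\<dots> = (\<Sum>i\<le>n'. M * ((M' choose i) * ((N-M) choose (n'-i))))"
    by (rule sum.cong) (simp_all only: Suc_times_binomial M mult.assoc)
  also have "\<dots> = M * ((M' + (N-M)) choose n')"
    by (simp add: sum_distrib_left[symmetric] vandermonde)
  finally show ?thesis using assms by (simp add: M n)
qed

lemma L2: assumes "2 \<le> M" "M \<le> N" "2 \<le> n"
  shows "(\<Sum>k\<in>{0..n}. k * (k-1) * (M choose k) * ((N-M) choose (n-k))) = M * (M-1) * ((N-2) choose (n-2))"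
proof -
  obtain n' where n: "n = Suc (Suc n')" using assms by (metis add_2_eq_Suc le_Suc_ex)
  obtain M' where M: "M = Suc (Suc M')" using assms by (metis add_2_eq_Suc le_Suc_ex)
  have "(\<Sum>k\<in>{0..n}. k * (k-1) * (M choose k) * ((N-M) choose (n-k)))
      = (\<Sum>i\<le>n'. Suc (Suc i) * Suc i * (Suc (Suc M') choose Suc (Suc i)) * ((N-M) choose (n'-i)))"
    unfolding atLeast0AtMost n M by (simp add: sum.atMost_Suc_shift del: sum.atMost_Suc)
  also have "\<dots> = (\<Sum>i\<le>n'. M * (M-1) * ((M' choose i) * ((N-M) choose (n'-i))))"
  proof (rule sum.cong)
    fix i
    have "Suc (Suc i) * Suc i * (Suc (Suc M') choose Suc (Suc i)) = Suc i * (Suc (Suc i) * (Suc (Suc M') choose Suc (Suc i)))"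
      by (simp only: ac_simps)
    also have "\<dots> = Suc (Suc M') * (Suc i * (Suc M' choose Suc i))"
      by (metis Suc_times_binomial mult.left_commute)
    also have "\<dots> = Suc (Suc M') * (Suc M' * (M' choose i))"
      by (simp only: Suc_times_binomial)
    finally have X: "Suc (Suc i) * Suc i * (Suc (Suc M') choose Suc (Suc i)) = Suc (Suc M') * (Suc M' * (M' choose i))" .
    show "Suc (Suc i) * Suc i * (Suc (Suc M') choose Suc (Suc i)) * ((N-M) choose (n'-i)) = M * (M-1) * ((M' choose i) * ((N-M) choose (n'-i)))"
      by (metis X M diff_Suc_1 mult.assoc)
  qed simp
  also have "\<dots> = M * (M-1) * ((M' + (N-M)) choose n')"
    by (simp add: sum_distrib_left[symmetric] vandermonde)
  finally show ?thesis using assms by (simp add: M n)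
qed

lemma C1: assumes "1 \<le> n" shows "n * (N choose n) = N * ((N-1) choose (n-1))"
  using times_binomial_minus1_eq[of n N] assms by simp

lemma C2: assumes "2 \<le> n" shows "n * (n-1) * (N choose n) = N * (N-1) * ((N-2) choose (n-2))"
proof -
  have "n * (n-1) * (N choose n) = (n-1) * (n * (N choose n))" by simp
  also have "\<dots> = N * ((n-1) * ((N-1) choose (n-1)))" using C1[of n N] assms by simp
  also have "(n-1) * ((N-1) choose (n-1)) = (N-1) * ((N-2) choose (n-2))"
    using C1[of "n-1" "N-1"] assms by (simp add: diff_diff_add numeral_2_eq_2)
  finally show ?thesis by simp
qed

lemma ln_half: fixes y :: real assumes "y \<ge> 1/2" shows "\<bar>ln y\<bar> \<le> 2 * \<bar>y - 1\<bar>"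
proof (cases "y \<ge> 1")
  case True
  then show ?thesis using ln_le_minus_one[of y] by auto
next
  case False
  have y0: "y > 0" using assms by simp
  have h1: "ln (1/y) \<le> 1/y - 1" using ln_le_minus_one[of "1/y"] y0 by simp
  have "(2*y-1)*(1-y) \<ge> 0" using assms False by (intro mult_nonneg_nonneg) auto
  hence "1 - y \<le> 2 * (1 - y) * y" by (simp add: algebra_simps)
  hence "(1 - y) / y \<le> 2 * (1 - y)" using y0 by (simp add: divide_simps)
  hence "1/y - 1 \<le> 2 * (1 - y)" using y0 by (simp add: diff_divide_distrib)
  with h1 have "ln (1/y) \<le> 2 * (1 - y)" by linarith
  then show ?thesis using False y0 by (simp add: ln_div)
qed

lemma pointwise: fixes x mu L :: real
  assumes x: "x \<ge> 1" and mu: "mu > 0" "mu \<le> L" and L: "L \<ge> 1"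
  shows "\<bar>ln (x / mu)\<bar> \<le> 2 * \<bar>x - mu\<bar> / mu + 4 * ln L * (x - mu)^2 / mu^2"
proof (cases "x \<ge> mu / 2")
  case True
  have "\<bar>ln (x / mu)\<bar> \<le> 2 * \<bar>x/mu - 1\<bar>" using True mu by (intro ln_half) (simp add: field_simps)
  also have "\<bar>x/mu - 1\<bar> = \<bar>x - mu\<bar> / mu" using mu by (simp add: field_simps abs_div_pos[symmetric])
  finally have "\<bar>ln (x / mu)\<bar> \<le> 2 * \<bar>x - mu\<bar> / mu" by simp
  moreover have "ln L \<ge> 0" using L by simp
  hence "4 * ln L * (x - mu)^2 / mu^2 \<ge> 0" by simp
  ultimately show ?thesis by linarith
next
  case False
  have "\<bar>ln (x / mu)\<bar> = ln mu - ln x" using False x mu by (simp add: ln_div)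
  also have "\<dots> \<le> ln L" proof -
    have "ln x \<ge> 0" using x by simp
    moreover have "ln mu \<le> ln L" using mu by simp
    ultimately show ?thesis by linarith
  qed
  finally have a: "\<bar>ln (x / mu)\<bar> \<le> ln L" .
  have "mu \<ge> 2" using False x by simp
  hence lL: "ln L \<ge> 0" using mu by simp
  have "(mu - x)^2 \<ge> (mu/2)^2" using False x mu by (intro power_mono) auto
  hence "(x - mu)^2 \<ge> (mu/2)^2" by (simp add: power2_commute)
  hence "4 * (x - mu)^2 / mu^2 \<ge> 1" using mu by (simp add: field_simps power2_eq_square)
  hence "ln L * 1 \<le> ln L * (4 * (x - mu)^2 / mu^2)" using lL by (intro mult_left_mono) auto
  hence "ln L \<le> 4 * ln L * (x - mu)^2 / mu^2" by (simp add: mult_ac)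
  moreover have "2 * \<bar>x - mu\<bar> / mu \<ge> 0" using mu by simp
  ultimately show ?thesis using a by linarith
qed

lemma amgm: fixes d mu :: real assumes "mu > 0"
  shows "2 * \<bar>d\<bar> / mu \<le> d^2 / (mu * sqrt mu) + 1 / sqrt mu"
proof -
  define s where "s = sqrt mu"
  have s: "s > 0" "mu = s^2" using assms by (auto simp: s_def)
  have "0 \<le> (\<bar>d\<bar> - s)^2" by simp
  hence "2 * \<bar>d\<bar> * s \<le> \<bar>d\<bar>^2 + s^2" by (simp add: power2_diff)
  hence "2 * \<bar>d\<bar> * s \<le> d^2 + s^2" by simp
  hence "2 * \<bar>d\<bar> / s^2 \<le> d^2 / (s^2 * s) + 1 / s" using s by (simp add: field_simps power2_eq_square)
  moreover have e1: "sqrt mu = s" by (simp add: s_def)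
  ultimately show ?thesis unfolding e1 by (simp only: s(2))
qed

lemma aux: fixes a D X b c :: real assumes "a > 0" "D > 0" "X * a = D * b"
  shows "c * b / a = c * X / D"
  using assms by (simp add: field_simps)

lemma S0: assumes "M \<le> N" "n \<le> N"
  shows "(\<Sum>k\<in>{0..n}. hypgeo_prob N M n k) = 1"
proof -
  have C: "real (N choose n) > 0" using assms by simp
  have "(\<Sum>k\<in>{0..n}. hypgeo_prob N M n k) = real (\<Sum>k\<in>{0..n}. (M choose k) * ((N-M) choose (n-k))) / real (N choose n)"
    unfolding hypgeo_prob_def by (simp add: sum_divide_distrib)
  also have "\<dots> = 1" using L0[OF assms(1)] C by simp
  finally show ?thesis .
qed

lemma S1: assumes "1 \<le> M" "M \<le> N" "1 \<le> n" "n \<le> N"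
  shows "(\<Sum>k\<in>{0..n}. hypgeo_prob N M n k * real k) = real n * real M / real N"
proof -
  have C: "real (N choose n) > 0" using assms by simp
  have "(\<Sum>k\<in>{0..n}. hypgeo_prob N M n k * real k) = real (\<Sum>k\<in>{0..n}. k * (M choose k) * ((N-M) choose (n-k))) / real (N choose n)"
    unfolding hypgeo_prob_def by (simp add: sum_divide_distrib mult_ac)
  also have "\<dots> = real M * real ((N-1) choose (n-1)) / real (N choose n)" using L1[OF assms(1-3)] by simp
  also have "\<dots> = real n * real M / real N"
  proof -
    have "real n * real (N choose n) = real N * real ((N-1) choose (n-1))"
      using C1[OF assms(3), of N] by (metis of_nat_mult)
    moreover have "real N > 0" using assms by simp
    ultimately show ?thesis using C by (simp add: field_simps)
  qed
  finally show ?thesis .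
qed

lemma S2: assumes "1 \<le> M" "M \<le> N" "1 \<le> n" "n \<le> N"
  shows "(\<Sum>k\<in>{0..n}. hypgeo_prob N M n k * (real k * (real k - 1))) \<le> (real n * real M / real N)^2"
proof (cases "2 \<le> M \<and> 2 \<le> n")
  case True
  have C: "real (N choose n) > 0" using assms by simp
  have N2: "N \<ge> 2" using True assms by simp
  have e: "real k * (real k - 1) = real (k * (k - 1))" for k
    by (cases k) (auto simp: algebra_simps)
  have "(\<Sum>k\<in>{0..n}. hypgeo_prob N M n k * (real k * (real k - 1))) = real (\<Sum>k\<in>{0..n}. k * (k-1) * (M choose k) * ((N-M) choose (n-k))) / real (N choose n)"
    unfolding hypgeo_prob_def e by (simp add: sum_divide_distrib mult_ac)
  also have "\<dots> = real M * real (M - 1) * real ((N-2) choose (n-2)) / real (N choose n)"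
    using L2[OF _ assms(2), of n] True by simp
  also have "\<dots> = real M * real (M - 1) * real n * real (n - 1) / (real N * real (N - 1))"
  proof -
    have eq: "real n * real (n-1) * real (N choose n) = real N * real (N - 1) * real ((N-2) choose (n-2))"
      using C2[of n N] True by (metis of_nat_mult)
    have pos: "real N * real (N - 1) > 0" using N2 by simp
    have "(real M * real (M - 1)) * real ((N-2) choose (n-2)) / real (N choose n) = (real M * real (M - 1)) * (real n * real (n-1)) / (real N * real (N - 1))"
      by (rule aux[OF C pos eq])
    then show ?thesis by (simp only: mult.assoc)
  qed
  also have "\<dots> \<le> (real n * real M / real N)^2"
  proof -
    have key: "real N * (real M - 1) * (real n - 1) \<le> (real N - 1) * real n * real M"
    proof -
      have "real n * real M \<le> real N * real M" using assms by (simp add: mult_right_mono)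
      also have "\<dots> \<le> real N * (real n + real M - 1)" using assms by (intro mult_left_mono) auto
      finally show ?thesis by (simp add: algebra_simps)
    qed
    have "real M * real (M - 1) * real n * real (n - 1) / (real N * real (N - 1))
        = (real M * real n) * ((real M - 1) * (real n - 1)) / (real N * (real N - 1))"
      using True N2 by (simp add: of_nat_diff mult_ac)
    also have "\<dots> \<le> (real M * real n) * (real n * real M / real N) / real N"
    proof -
      have "(real M - 1) * (real n - 1) / (real N - 1) \<le> real n * real M / real N"
        using key N2 by (simp add: divide_simps mult_ac)
      hence "(real M * real n) * ((real M - 1) * (real n - 1) / (real N - 1)) / real N \<le> (real M * real n) * (real n * real M / real N) / real N"
        using N2 by (intro divide_right_mono mult_left_mono) auto
      thus ?thesis by (simp add: mult_ac)
    qed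
    also have "\<dots> = (real n * real M / real N)^2" by (simp add: power2_eq_square mult_ac)
    finally show ?thesis .
  qed
  finally show ?thesis .
next
  case False
  have "hypgeo_prob N M n k * (real k * (real k - 1)) = 0" if "k \<in> {0..n}" for k
  proof (cases "k \<le> 1")
    case True then have "k = 0 \<or> k = 1" by auto
    then show ?thesis by auto
  next
    case k: False
    then have "M < k" using False that assms by auto
    then show ?thesis by (simp add: hypgeo_prob_def)
  qed
  hence "(\<Sum>k\<in>{0..n}. hypgeo_prob N M n k * (real k * (real k - 1))) = 0" by (intro sum.neutral) blast
  then show ?thesis by simp
qed

theorem lemma5:
  fixes N M n :: nat
  assumes "1 \<le> M" and "M \<le> N" and "1 \<le> n" and "n \<le> N"
  shows "hypgeo_expect N M n
           (\<lambda>k. \<bar>ln (real k / hypgeo_expect N M n real)\<bar> * (if k > 0 then 1 else 0))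
         \<le> 4 * real N * ln (real N) / (real n * real M) + 2 * sqrt (real N / (real n * real M))"
proof -
  define p where "p = hypgeo_prob N M n"
  define mu where "mu = real n * real M / real N"
  have emu: "hypgeo_expect N M n real = mu"
    unfolding hypgeo_expect_def mu_def using S1[OF assms] by simp
  have Npos: "real N \<ge> 1" using assms by simp
  have mupos: "mu > 0" using assms by (simp add: mu_def)
  have muN: "mu \<le> real N"
  proof -
    have "real n * real M \<le> real N * real N" using assms by (intro mult_mono) auto
    thus ?thesis using Npos by (simp add: mu_def divide_simps)
  qed
  have p0: "p k \<ge> 0" for k by (simp add: p_def hypgeo_prob_def)
  have s0: "(\<Sum>k\<in>{0..n}. p k) = 1" using S0[OF assms(2,4)] by (simp add: p_def)
  have s1: "(\<Sum>k\<in>{0..n}. p k * real k) = mu" using S1[OF assms] by (simp add: p_def mu_def)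
  have s2: "(\<Sum>k\<in>{0..n}. p k * (real k * (real k - 1))) \<le> mu^2" using S2[OF assms] by (simp add: p_def mu_def)
  have var: "(\<Sum>k\<in>{0..n}. p k * (real k - mu)^2) \<le> mu"
  proof -
    have "(\<Sum>k\<in>{0..n}. p k * (real k - mu)^2)
        = (\<Sum>k\<in>{0..n}. p k * (real k * (real k - 1)) + (1 - 2*mu) * (p k * real k) + mu^2 * p k)"
      by (rule sum.cong) (simp_all add: power2_eq_square algebra_simps)
    also have "\<dots> = (\<Sum>k\<in>{0..n}. p k * (real k * (real k - 1))) + (1 - 2*mu) * (\<Sum>k\<in>{0..n}. p k * real k) + mu^2 * (\<Sum>k\<in>{0..n}. p k)"
      by (simp add: sum.distrib sum_distrib_left)
    also have "\<dots> \<le> mu^2 + (1 - 2*mu) * mu + mu^2" using s0 s1 s2 by simp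
    also have "\<dots> = mu" by (simp add: power2_eq_square algebra_simps)
    finally show ?thesis .
  qed
  define A where "A = 1 / (mu * sqrt mu) + 4 * ln (real N) / mu^2"
  define B where "B = 1 / sqrt mu"
  have lnN: "ln (real N) \<ge> 0" using Npos by simp
  have A0: "A \<ge> 0" using mupos lnN by (simp add: A_def)
  have B0: "B \<ge> 0" using mupos by (simp add: B_def)
  have pw: "\<bar>ln (real k / mu)\<bar> * (if k > 0 then 1 else 0) \<le> A * (real k - mu)^2 + B" for k
  proof (cases "k > 0")
    case True
    have "\<bar>ln (real k / mu)\<bar> \<le> 2 * \<bar>real k - mu\<bar> / mu + 4 * ln (real N) * (real k - mu)^2 / mu^2"
      using True mupos muN Npos by (intro pointwise) auto
    also have "\<dots> \<le> (real k - mu)^2 / (mu * sqrt mu) + 1 / sqrt mu + 4 * ln (real N) * (real k - mu)^2 / mu^2"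
      using amgm[OF mupos, of "real k - mu"] by simp
    also have "\<dots> = A * (real k - mu)^2 + B" by (simp add: A_def B_def algebra_simps)
    finally show ?thesis using True by simp
  next
    case False
    then show ?thesis using A0 B0 by simp
  qed
  have "hypgeo_expect N M n (\<lambda>k. \<bar>ln (real k / hypgeo_expect N M n real)\<bar> * (if k > 0 then 1 else 0))
      = (\<Sum>k\<in>{0..n}. p k * (\<bar>ln (real k / mu)\<bar> * (if k > 0 then 1 else 0)))"
    unfolding emu by (simp add: hypgeo_expect_def p_def)
  also have "\<dots> \<le> (\<Sum>k\<in>{0..n}. p k * (A * (real k - mu)^2 + B))"
    by (intro sum_mono mult_left_mono pw p0)
  also have "\<dots> = A * (\<Sum>k\<in>{0..n}. p k * (real k - mu)^2) + B * (\<Sum>k\<in>{0..n}. p k)"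
    by (simp add: sum.distrib sum_distrib_left algebra_simps)
  also have "\<dots> \<le> A * mu + B" using var A0 s0 by (simp add: mult_left_mono)
  also have "\<dots> = 4 * ln (real N) / mu + 2 / sqrt mu"
    using mupos by (simp add: A_def B_def field_simps power2_eq_square)
  also have "\<dots> = 4 * real N * ln (real N) / (real n * real M) + 2 * sqrt (real N / (real n * real M))"
  proof -
    have "sqrt (real N / (real n * real M)) = 1 / sqrt mu"
      by (simp add: mu_def real_sqrt_divide)
    moreover have "4 * ln (real N) / mu = 4 * real N * ln (real N) / (real n * real M)"
      using Npos by (simp add: mu_def)
    ultimately show ?thesis by simp
  qed
  finally show ?thesis .
qed

end
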